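(* Let $\mathcal{V}$ be a quaternionic two-sided Banach algebra with unit $1\neq0$, let $a\in\mathcal{V}$ and $q\in\partial\sigma_S(a)$. Then there exists a sequence $(b_n)$ of elements of $\mathcal{V}$ with $\|b_n\|=1$ and $$\lim_{n}(a^{2}-2Re(q)a+|q|^{2}1_{\mathcal{V}})b_{n}=\lim_{n}b_{n}(a^{2}-2Re(q)a+|q|^{2}1_{\mathcal{V}})=0.$$
   Context: $\mathbb{H}$ denotes the quaternions, $Re(q)$ the real part and $|q|$ the norm of $q$. A quaternionic two-sided Banach algebra with unit is a two-sided $\mathbb{H}$-vector space $\mathcal{V}$ with an associative product satisfying $x(y+z)=xy+xz$, $(x+y)z=xz+yz$, $q(xy)=(qx)y$, $(xy)q=x(yq)$, complete for a norm with $\|qx\|=|q|\|x\|=\|xq\|$, $\|xy\|\le\|x\|\|y\|$, with unit $1_{\mathcal{V}}$, $\|1_{\mathcal{V}}\|=1$. $\mathcal{V}^{-1}$ is the set of invertible elements. The S-spectrum of $a$ is $\sigma_S(a)=\{q\in\mathbb{H}: a^2-2Re(q)a+|q|^21_{\mathcal{V}}\notin\mathcal{V}^{-1}\}$, and $\partial\sigma_S(a)$ is its boundary in $\mathbb{H}$. *)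

theory Defs
  imports "HOL-Analysis.Analysis"
begin

datatype quat = Quat (qRe: real) (qI: real) (qJ: real) (qK: real)

definition qadd :: "quat \<Rightarrow> quat \<Rightarrow> quat" where
  "qadd p q = Quat (qRe p + qRe q) (qI p + qI q) (qJ p + qJ q) (qK p + qK q)"

definition qmult :: "quat \<Rightarrow> quat \<Rightarrow> quat" where
  "qmult p q = Quat
     (qRe p * qRe q - qI p * qI q - qJ p * qJ q - qK p * qK q)
     (qRe p * qI q + qI p * qRe q + qJ p * qK q - qK p * qJ q)
     (qRe p * qJ q - qI p * qK q + qJ p * qRe q + qK p * qI q)
     (qRe p * qK q + qI p * qJ q - qJ p * qI q + qK p * qRe q)"

definition qdiff :: "quat \<Rightarrow> quat \<Rightarrow> quat" where
  "qdiff p q = Quat (qRe p - qRe q) (qI p - qI q) (qJ p - qJ q) (qK p - qK q)"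

definition qof_real :: "real \<Rightarrow> quat" where
  "qof_real r = Quat r 0 0 0"

definition qnorm :: "quat \<Rightarrow> real" where
  "qnorm q = sqrt ((qRe q)\<^sup>2 + (qI q)\<^sup>2 + (qJ q)\<^sup>2 + (qK q)\<^sup>2)"

definition qboundary :: "quat set \<Rightarrow> quat set" where
  "qboundary S = {q. \<forall>e>0. (\<exists>p\<in>S. qnorm (qdiff p q) < e) \<and> (\<exists>p. p \<notin> S \<and> qnorm (qdiff p q) < e)}"

text \<open>The carrier type is a real Banach algebra with unit of norm 1 (this encodes
  completeness, associativity, distributivity, submultiplicativity of the norm and
  the norm of the unit).\<close>

definition quat_two_sided_banach_algebra ::
  "(quat \<Rightarrow> 'v::{real_normed_algebra_1,banach} \<Rightarrow> 'v) \<Rightarrow> ('v \<Rightarrow> quat \<Rightarrow> 'v) \<Rightarrow> bool" where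
  "quat_two_sided_banach_algebra lsc rsc \<longleftrightarrow>
     (\<forall>q x y. lsc q (x + y) = lsc q x + lsc q y) \<and>
     (\<forall>p q x. lsc (qadd p q) x = lsc p x + lsc q x) \<and>
     (\<forall>p q x. lsc (qmult p q) x = lsc p (lsc q x)) \<and>
     (\<forall>q x y. rsc (x + y) q = rsc x q + rsc y q) \<and>
     (\<forall>p q x. rsc x (qadd p q) = rsc x p + rsc x q) \<and>
     (\<forall>p q x. rsc x (qmult p q) = rsc (rsc x p) q) \<and>
     (\<forall>p q x. rsc (lsc p x) q = lsc p (rsc x q)) \<and>
     (\<forall>r x. lsc (qof_real r) x = scaleR r x \<and> rsc x (qof_real r) = scaleR r x) \<and>
     (\<forall>q x y. lsc q (x * y) = lsc q x * y) \<and>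
     (\<forall>q x y. rsc (x * y) q = x * rsc y q) \<and>
     (\<forall>q x. norm (lsc q x) = qnorm q * norm x \<and> norm (rsc x q) = qnorm q * norm x)"

definition S_spectrum :: "'v::real_normed_algebra_1 \<Rightarrow> quat set" where
  "S_spectrum a = {q. \<not> (\<exists>y. y * (a\<^sup>2 - scaleR (2 * qRe q) a + scaleR ((qnorm q)\<^sup>2) 1) = 1 \<and>
                                 (a\<^sup>2 - scaleR (2 * qRe q) a + scaleR ((qnorm q)\<^sup>2) 1) * y = 1)}"

end

theory Submission
  imports Defs
begin

definition isinv :: "'v::real_normed_algebra_1 \<Rightarrow> bool" where
  "isinv x \<longleftrightarrow> (\<exists>y. y * x = 1 \<and> x * y = 1)"

lemma neumann:
  fixes u :: "'v::{real_normed_algebra_1,banach}"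
  assumes "norm u < 1"
  shows "isinv (1 - u)"
proof -
  have sn: "summable (\<lambda>n. norm (u ^ n))"
    by (rule summable_norm_comparison_test[where g="\<lambda>n. norm u ^ n"])
       (auto simp: norm_power_ineq intro!: summable_geometric assms)
  hence s: "summable (\<lambda>n. u ^ n)" by (rule summable_norm_cancel)
  have t: "(\<lambda>n. u ^ n - u ^ Suc n) sums 1"
    using telescope_sums'[OF LIMSEQ_power_zero[OF assms]] by simp
  define w where "w = suminf (\<lambda>n. u ^ n)"
  have "w * (1 - u) = w - w * u" by (simp add: algebra_simps)
  also have "w * u = (\<Sum>n. u ^ n * u)" unfolding w_def by (rule suminf_mult2[OF s])
  also have "w - (\<Sum>n. u ^ n * u) = (\<Sum>n. u ^ n - u ^ n * u)"
    unfolding w_def using suminf_diff[OF s summable_mult2[OF s, of u]] by simp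
  also have "\<dots> = 1" using sums_unique[OF t] by (simp add: power_commutes)
  finally have 1: "w * (1 - u) = 1" .
  have "(1 - u) * w = w - u * w" by (simp add: algebra_simps)
  also have "u * w = (\<Sum>n. u * u ^ n)" unfolding w_def by (rule suminf_mult[OF s, symmetric])
  also have "w - (\<Sum>n. u * u ^ n) = (\<Sum>n. u ^ n - u * u ^ n)"
    unfolding w_def using suminf_diff[OF s summable_mult[OF s, of u]] by simp
  also have "\<dots> = 1" using sums_unique[OF t] by (simp add: power_Suc)
  finally have 2: "(1 - u) * w = 1" .
  show ?thesis using 1 2 unfolding isinv_def by blast
qed

lemma perturb:
  fixes x y z :: "'v::{real_normed_algebra_1,banach}"
  assumes xy: "x * y = 1" and yx: "y * x = 1" and n: "norm (z - x) * norm y < 1"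
  shows "isinv z"
proof -
  define u where "u = y * (x - z)"
  have "norm u \<le> norm y * norm (x - z)" unfolding u_def by (rule norm_mult_ineq)
  also have "\<dots> = norm (z - x) * norm y" by (simp add: norm_minus_commute)
  finally have "norm u < 1" using n by linarith
  then obtain w where w1: "w * (1 - u) = 1" and w2: "(1 - u) * w = 1"
    using neumann unfolding isinv_def by blast
  have zx: "z = x * (1 - u)"
    unfolding u_def by (simp add: algebra_simps xy mult.assoc[symmetric])
  have "z * (w * y) = x * ((1 - u) * w) * y" unfolding zx by (simp add: mult.assoc)
  also have "\<dots> = 1" using w2 xy by simp
  finally have a: "z * (w * y) = 1" .
  have "(w * y) * z = w * (y * x) * (1 - u)" unfolding zx by (simp add: mult.assoc)
  also have "\<dots> = 1" using w1 yx by simp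
  finally have b: "(w * y) * z = 1" .
  show ?thesis using a b unfolding isinv_def by blast
qed

lemma key:
  fixes x :: "'v::{real_normed_algebra_1,banach}"
  assumes one: "(1::'v) \<noteq> 0"
    and inv: "\<And>n. isinv (xs n)" and ni: "\<not> isinv x" and lim: "xs \<longlonglongrightarrow> x"
  shows "\<exists>b :: nat \<Rightarrow> 'v. (\<forall>n. norm (b n) = 1) \<and> (\<lambda>n. x * b n) \<longlonglongrightarrow> 0 \<and> (\<lambda>n. b n * x) \<longlonglongrightarrow> 0"
proof -
  obtain ys where ys1: "\<And>n. ys n * xs n = 1" and ys2: "\<And>n. xs n * ys n = 1"
    using inv unfolding isinv_def by metis
  have ynz: "ys n \<noteq> 0" for n using ys1[of n] one by auto
  have big: "1 \<le> norm (x - xs n) * norm (ys n)" for n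
  proof (rule ccontr)
    assume "\<not> ?thesis"
    then have "isinv x" by (metis perturb ys1 ys2 not_le)
    then show False using ni by simp
  qed
  define b where "b n = scaleR (inverse (norm (ys n))) (ys n)" for n
  have nb: "norm (b n) = 1" for n using ynz[of n] unfolding b_def by simp
  have d0: "(\<lambda>n. norm (x - xs n)) \<longlonglongrightarrow> 0"
    using tendsto_norm[OF tendsto_diff[OF tendsto_const lim, of x]] by simp
  have inv_le: "inverse (norm (ys n)) \<le> norm (x - xs n)" for n
  proof -
    have p: "norm (ys n) > 0" using ynz by simp
    show ?thesis using big[of n] p by (simp add: field_simps)
  qed
  have L: "(\<lambda>n. x * b n) \<longlonglongrightarrow> 0"
  proof (rule Lim_null_comparison)
    show "((\<lambda>n. 2 * norm (x - xs n)) \<longlongrightarrow> 0) sequentially"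
      using tendsto_mult[OF tendsto_const d0, of 2] by simp
    show "\<forall>\<^sub>F n in sequentially. norm (x * b n) \<le> 2 * norm (x - xs n)"
    proof (rule always_eventually, rule allI)
      fix n
      have e: "x * b n = scaleR (inverse (norm (ys n))) ((x - xs n) * ys n + 1)"
        unfolding b_def by (simp add: algebra_simps ys2)
      have "norm ((x - xs n) * ys n + 1) \<le> norm (x - xs n) * norm (ys n) + 1"
        by (rule order_trans[OF norm_triangle_ineq]) (simp add: norm_mult_ineq)
      hence "norm (x * b n) \<le> inverse (norm (ys n)) * (norm (x - xs n) * norm (ys n) + 1)"
        unfolding e by (simp add: mult_left_mono)
      also have "\<dots> = norm (x - xs n) + inverse (norm (ys n))"
        using ynz[of n] by (simp add: field_simps)
      finally show "norm (x * b n) \<le> 2 * norm (x - xs n)" using inv_le[of n] by simp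
    qed
  qed
  have R: "(\<lambda>n. b n * x) \<longlonglongrightarrow> 0"
  proof (rule Lim_null_comparison)
    show "((\<lambda>n. 2 * norm (x - xs n)) \<longlongrightarrow> 0) sequentially"
      using tendsto_mult[OF tendsto_const d0, of 2] by simp
    show "\<forall>\<^sub>F n in sequentially. norm (b n * x) \<le> 2 * norm (x - xs n)"
    proof (rule always_eventually, rule allI)
      fix n
      have e: "b n * x = scaleR (inverse (norm (ys n))) (ys n * (x - xs n) + 1)"
        unfolding b_def by (simp add: algebra_simps ys1)
      have "norm (ys n * (x - xs n) + 1) \<le> norm (x - xs n) * norm (ys n) + 1"
        by (rule order_trans[OF norm_triangle_ineq]) (simp add: norm_mult_ineq mult.commute)
      hence "norm (b n * x) \<le> inverse (norm (ys n)) * (norm (x - xs n) * norm (ys n) + 1)"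
        unfolding e by (simp add: mult_left_mono)
      also have "\<dots> = norm (x - xs n) + inverse (norm (ys n))"
        using ynz[of n] by (simp add: field_simps)
      finally show "norm (b n * x) \<le> 2 * norm (x - xs n)" using inv_le[of n] by simp
    qed
  qed
  show ?thesis using nb L R by blast
qed

lemma abs_le_sqrt4: "\<bar>x\<bar> \<le> sqrt (x\<^sup>2 + y + z + w)" if "y \<ge> 0" "z \<ge> 0" "w \<ge> 0" for x y z w :: real
proof -
  have "\<bar>x\<bar> = sqrt (x\<^sup>2)" by simp
  also have "\<dots> \<le> sqrt (x\<^sup>2 + y + z + w)" using that by (intro real_sqrt_le_mono) simp
  finally show ?thesis .
qed

lemma comps:
  assumes "(\<lambda>n. qnorm (qdiff (p n) q)) \<longlonglongrightarrow> 0"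
  shows "(\<lambda>n. qRe (p n)) \<longlonglongrightarrow> qRe q" "(\<lambda>n. qI (p n)) \<longlonglongrightarrow> qI q"
        "(\<lambda>n. qJ (p n)) \<longlonglongrightarrow> qJ q" "(\<lambda>n. qK (p n)) \<longlonglongrightarrow> qK q"
proof -
  have b: "\<bar>qRe (p n) - qRe q\<bar> \<le> qnorm (qdiff (p n) q)"
          "\<bar>qI (p n) - qI q\<bar> \<le> qnorm (qdiff (p n) q)"
          "\<bar>qJ (p n) - qJ q\<bar> \<le> qnorm (qdiff (p n) q)"
          "\<bar>qK (p n) - qK q\<bar> \<le> qnorm (qdiff (p n) q)" for n
    unfolding qnorm_def qdiff_def by (auto intro!: real_le_rsqrt simp: power2_abs)
  show "(\<lambda>n. qRe (p n)) \<longlonglongrightarrow> qRe q"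
  proof -
    have "(\<lambda>n. qRe (p n) - qRe q) \<longlonglongrightarrow> 0"
      by (rule Lim_null_comparison[OF _ assms], rule always_eventually) (use b in simp)
    thus ?thesis by (simp add: LIM_zero_iff)
  qed
  show "(\<lambda>n. qI (p n)) \<longlonglongrightarrow> qI q"
  proof -
    have "(\<lambda>n. qI (p n) - qI q) \<longlonglongrightarrow> 0"
      by (rule Lim_null_comparison[OF _ assms], rule always_eventually) (use b in simp)
    thus ?thesis by (simp add: LIM_zero_iff)
  qed
  show "(\<lambda>n. qJ (p n)) \<longlonglongrightarrow> qJ q"
  proof -
    have "(\<lambda>n. qJ (p n) - qJ q) \<longlonglongrightarrow> 0"
      by (rule Lim_null_comparison[OF _ assms], rule always_eventually) (use b in simp)
    thus ?thesis by (simp add: LIM_zero_iff)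
  qed
  show "(\<lambda>n. qK (p n)) \<longlonglongrightarrow> qK q"
  proof -
    have "(\<lambda>n. qK (p n) - qK q) \<longlonglongrightarrow> 0"
      by (rule Lim_null_comparison[OF _ assms], rule always_eventually) (use b in simp)
    thus ?thesis by (simp add: LIM_zero_iff)
  qed
qed

lemma qnorm_sq: "(qnorm p)\<^sup>2 = (qRe p)\<^sup>2 + (qI p)\<^sup>2 + (qJ p)\<^sup>2 + (qK p)\<^sup>2"
  unfolding qnorm_def by simp

lemma Qcont:
  fixes a :: "'v::real_normed_algebra_1"
  assumes "(\<lambda>n. qnorm (qdiff (p n) q)) \<longlonglongrightarrow> 0"
  shows "(\<lambda>n. a\<^sup>2 - scaleR (2 * qRe (p n)) a + scaleR ((qnorm (p n))\<^sup>2) 1) \<longlonglongrightarrow>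
         a\<^sup>2 - scaleR (2 * qRe q) a + scaleR ((qnorm q)\<^sup>2) 1"
  unfolding qnorm_sq using comps[OF assms] by (intro tendsto_intros)

lemma seq_choice:
  assumes "q \<in> qboundary S"
  shows "\<exists>p. (\<forall>n. p n \<notin> S) \<and> (\<lambda>n. qnorm (qdiff (p n) q)) \<longlonglongrightarrow> 0"
        "\<exists>p. (\<forall>n. p n \<in> S) \<and> (\<lambda>n. qnorm (qdiff (p n) q)) \<longlonglongrightarrow> 0"
proof -
  have h: "\<forall>n. (\<exists>p\<in>S. qnorm (qdiff p q) < inverse (real (Suc n))) \<and>
     (\<exists>p. p \<notin> S \<and> qnorm (qdiff p q) < inverse (real (Suc n)))"
    using assms unfolding qboundary_def by simp
  have nn: "qnorm x \<ge> 0" for x unfolding qnorm_def by simp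
  from h obtain p where p: "\<And>n. p n \<notin> S \<and> qnorm (qdiff (p n) q) < inverse (real (Suc n))" by metis
  from h obtain p' where p': "\<And>n. p' n \<in> S \<and> qnorm (qdiff (p' n) q) < inverse (real (Suc n))" by metis
  have "(\<lambda>n. qnorm (qdiff (p n) q)) \<longlonglongrightarrow> 0"
    using p nn by (intro Lim_null_comparison[OF always_eventually LIMSEQ_inverse_real_of_nat])
       (auto intro: less_imp_le)
  then show "\<exists>p. (\<forall>n. p n \<notin> S) \<and> (\<lambda>n. qnorm (qdiff (p n) q)) \<longlonglongrightarrow> 0" using p by blast
  have "(\<lambda>n. qnorm (qdiff (p' n) q)) \<longlonglongrightarrow> 0"
    using p' nn by (intro Lim_null_comparison[OF always_eventually LIMSEQ_inverse_real_of_nat])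
       (auto intro: less_imp_le)
  then show "\<exists>p. (\<forall>n. p n \<in> S) \<and> (\<lambda>n. qnorm (qdiff (p n) q)) \<longlonglongrightarrow> 0" using p' by blast
qed

theorem mainTheorem5:
  fixes lsc :: "quat \<Rightarrow> 'v::{real_normed_algebra_1,banach} \<Rightarrow> 'v"
    and rsc :: "'v \<Rightarrow> quat \<Rightarrow> 'v"
    and a :: 'v and q :: quat
  assumes "quat_two_sided_banach_algebra lsc rsc"
    and "(1::'v) \<noteq> 0"
    and "q \<in> qboundary (S_spectrum a)"
  shows "\<exists>b :: nat \<Rightarrow> 'v. (\<forall>n. norm (b n) = 1) \<and>
     (\<lambda>n. (a\<^sup>2 - scaleR (2 * qRe q) a + scaleR ((qnorm q)\<^sup>2) 1) * b n) \<longlonglongrightarrow> 0 \<and>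
     (\<lambda>n. b n * (a\<^sup>2 - scaleR (2 * qRe q) a + scaleR ((qnorm q)\<^sup>2) 1)) \<longlonglongrightarrow> 0"
proof -
  define Q where "Q p = a\<^sup>2 - scaleR (2 * qRe p) a + scaleR ((qnorm p)\<^sup>2) (1::'v)" for p
  have S: "p \<in> S_spectrum a \<longleftrightarrow> \<not> isinv (Q p)" for p
    unfolding S_spectrum_def isinv_def Q_def by auto
  have ni: "\<not> isinv (Q q)"
  proof
    assume "isinv (Q q)"
    then obtain y where y1: "y * Q q = 1" and y2: "Q q * y = 1" unfolding isinv_def by blast
    obtain p where p: "\<And>n. p n \<in> S_spectrum a" and pl: "(\<lambda>n. qnorm (qdiff (p n) q)) \<longlonglongrightarrow> 0"
      using seq_choice(2)[OF assms(3)] by blast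
    have "(\<lambda>n. Q (p n)) \<longlonglongrightarrow> Q q" unfolding Q_def by (rule Qcont[OF pl])
    hence "(\<lambda>n. norm (Q (p n) - Q q) * norm y) \<longlonglongrightarrow> 0 * norm y"
      by (intro tendsto_intros) (simp add: LIM_zero tendsto_norm_zero)
    hence "\<forall>\<^sub>F n in sequentially. norm (Q (p n) - Q q) * norm y < 1"
      using order_tendstoD(2) by fastforce
    then obtain n where "norm (Q (p n) - Q q) * norm y < 1" using eventually_sequentially by auto
    hence "isinv (Q (p n))" using perturb[OF y2 y1] by blast
    thus False using p[of n] S by blast
  qed
  obtain p where p: "\<And>n. p n \<notin> S_spectrum a" and pl: "(\<lambda>n. qnorm (qdiff (p n) q)) \<longlonglongrightarrow> 0"
    using seq_choice(1)[OF assms(3)] by blast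
  have "(\<lambda>n. Q (p n)) \<longlonglongrightarrow> Q q" unfolding Q_def by (rule Qcont[OF pl])
  from key[OF assms(2) _ ni this] p S show ?thesis unfolding Q_def by blast
qed

end
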